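(* Let $k$ be a difference field of characteristic $0$ and $R=k\{y_1,\ldots,y_n\}$. Any strictly ascending chain $I_1\subsetneq I_2\subsetneq\cdots$ of well-mixed $\sigma$-ideals of $R$, each of which is generated by monomials (i.e. each $I_j$ is the well-mixed closure $\langle F_j\rangle$ of some set $F_j$ of monomials), is finite.
   Context: A difference field is a field $k$ with a ring endomorphism $\sigma$. $R=k\{y_1,\ldots,y_n\}$ is the polynomial ring over $k$ in the variables $\sigma^j(y_i)$ ($1\le i\le n$, $j\ge0$) with $\sigma$ extended naturally. For $p=\sum c_ix^i\in\mathbb{N}[x]$ and $a\in R$, $a^p=\prod_i(\sigma^i(a))^{c_i}$; for $\mathbf{u}\in\mathbb{N}[x]^n$ a monomial is $\mathbf{y}^{\mathbf{u}}=y_1^{u_1}\cdots y_n^{u_n}$. A $\sigma$-ideal is an ideal stable under $\sigma$; it is well-mixed if $ab\in I$ implies $a\sigma(b)\in I$. $\langle F\rangle$ is the smallest well-mixed $\sigma$-ideal containing $F$. *)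

theory Defs
  imports "HOL-Library.Poly_Mapping"
begin

text \<open>The difference polynomial ring R = k{y_1,...,y_n}: polynomials over k in the
variables sigma^j(y_i), represented as the variable (i, j) with i ranging over a finite
index type 'i (so n = CARD('i)) and j :: nat.  A monomial (exponent vector) is a
finitely supported map from variables to nat; a polynomial is a finitely
supported map from monomials to coefficients.\<close>

type_synonym ('i, 'k) dpoly = "(('i \<times> nat) \<Rightarrow>\<^sub>0 nat) \<Rightarrow>\<^sub>0 'k"

definition ring_endo :: "('k::field \<Rightarrow> 'k) \<Rightarrow> bool" where
  "ring_endo s \<longleftrightarrow> (\<forall>a b. s (a + b) = s a + s b) \<and> (\<forall>a b. s (a * b) = s a * s b) \<and> s 1 = 1"

definition shift_mon :: "(('i \<times> nat) \<Rightarrow>\<^sub>0 nat) \<Rightarrow> (('i \<times> nat) \<Rightarrow>\<^sub>0 nat)" where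
  "shift_mon m = (\<Sum>v\<in>Poly_Mapping.keys m. Poly_Mapping.single (fst v, Suc (snd v)) (Poly_Mapping.lookup m v))"

definition dsigma :: "('k::field \<Rightarrow> 'k) \<Rightarrow> ('i, 'k) dpoly \<Rightarrow> ('i, 'k) dpoly" where
  "dsigma s p = (\<Sum>m\<in>Poly_Mapping.keys p. Poly_Mapping.single (shift_mon m) (s (Poly_Mapping.lookup p m)))"

definition is_ideal :: "('i, 'k::field) dpoly set \<Rightarrow> bool" where
  "is_ideal I \<longleftrightarrow> 0 \<in> I \<and> (\<forall>a\<in>I. \<forall>b\<in>I. a + b \<in> I) \<and> (\<forall>a\<in>I. \<forall>r. r * a \<in> I)"

definition sigma_ideal :: "('k::field \<Rightarrow> 'k) \<Rightarrow> ('i, 'k) dpoly set \<Rightarrow> bool" where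
  "sigma_ideal s I \<longleftrightarrow> is_ideal I \<and> (\<forall>a\<in>I. dsigma s a \<in> I)"

definition well_mixed :: "('k::field \<Rightarrow> 'k) \<Rightarrow> ('i, 'k) dpoly set \<Rightarrow> bool" where
  "well_mixed s I \<longleftrightarrow> (\<forall>a b. a * b \<in> I \<longrightarrow> a * dsigma s b \<in> I)"

definition wm_closure :: "('k::field \<Rightarrow> 'k) \<Rightarrow> ('i, 'k) dpoly set \<Rightarrow> ('i, 'k) dpoly set" where
  "wm_closure s F = \<Inter> {I. sigma_ideal s I \<and> well_mixed s I \<and> F \<subseteq> I}"

definition is_monomial :: "('i, 'k::field) dpoly \<Rightarrow> bool" where
  "is_monomial p \<longleftrightarrow> (\<exists>m. p = Poly_Mapping.single m 1)"

end

theory Submission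
  imports Defs "HOL-Library.Ramsey"
begin

definition afull :: "('a \<Rightarrow> bool) \<Rightarrow> ('a \<Rightarrow> 'a \<Rightarrow> bool) \<Rightarrow> bool" where
  "afull P R \<longleftrightarrow> (\<forall>f::nat\<Rightarrow>'a. (\<forall>k. P (f k)) \<longrightarrow> (\<exists>i j. i < j \<and> R (f i) (f j)))"

definition ascs :: "('a \<Rightarrow> bool) \<Rightarrow> ('a \<Rightarrow> 'a \<Rightarrow> bool) \<Rightarrow> bool" where
  "ascs P R \<longleftrightarrow> (\<forall>f::nat\<Rightarrow>'a. (\<forall>k. P (f k)) \<longrightarrow> (\<exists>g::nat\<Rightarrow>nat. strict_mono g \<and> (\<forall>i j. i < j \<longrightarrow> R (f (g i)) (f (g j)))))"

lemma af_asc: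
  fixes P :: "'a \<Rightarrow> bool"
  assumes "afull P R" shows "ascs P R"
  unfolding ascs_def
proof (intro allI impI)
  fix f :: "nat \<Rightarrow> 'a" assume Pf: "\<forall>k. P (f k)"
  define col where "col X = (if R (f (Min X)) (f (Max X)) then 0 else (1::nat))" for X :: "nat set"
  have "\<exists>Y t. Y \<subseteq> UNIV \<and> infinite Y \<and> t < 2 \<and> (\<forall>x\<in>Y. \<forall>y\<in>Y. x\<noteq>y \<longrightarrow> col {x, y} = t)"
    by (rule Ramsey2) (auto simp: col_def)
  then obtain Y t where Y: "infinite Y" "t < 2" "\<forall>x\<in>Y. \<forall>y\<in>Y. x\<noteq>y \<longrightarrow> col {x, y} = t" by blast
  define g where "g = enumerate Y"
  have sm: "strict_mono g" unfolding g_def using Y(1) by (rule strict_mono_enumerate)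
  have gY: "g i \<in> Y" for i unfolding g_def using Y(1) by (rule enumerate_in_set)
  have colg: "i < j \<Longrightarrow> col {g i, g j} = (if R (f (g i)) (f (g j)) then 0 else 1)" for i j
  proof -
    assume "i < j" then have "g i < g j" using sm by (simp add: strict_mono_less)
    then show ?thesis by (simp add: col_def min_def max_def)
  qed
  show "\<exists>g::nat\<Rightarrow>nat. strict_mono g \<and> (\<forall>i j. i < j \<longrightarrow> R (f (g i)) (f (g j)))"
  proof (cases "t = 0")
    case True
    have "R (f (g i)) (f (g j))" if "i < j" for i j
    proof -
      have "g i < g j" using sm that by (rule strict_monoD)
      then have "g i \<noteq> g j" by simp
      then have "col {g i, g j} = 0" using Y(3) gY True by blast
      with colg[OF that] show ?thesis by (simp split: if_splits)
    qed
    then show ?thesis using sm by (intro exI[of _ g]) auto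
  next
    case False
    have P2: "\<forall>k. P ((f \<circ> g) k)" using Pf by simp
    have H: "\<forall>f::nat\<Rightarrow>'a. (\<forall>k. P (f k)) \<longrightarrow> (\<exists>i j. i < j \<and> R (f i) (f j))" using assms unfolding afull_def .
    then have "(\<forall>k. P ((f \<circ> g) k)) \<longrightarrow> (\<exists>i j. i < j \<and> R ((f \<circ> g) i) ((f \<circ> g) j))" by (rule spec)
    then have "\<exists>i j. i < j \<and> R ((f \<circ> g) i) ((f \<circ> g) j)" using P2 by (rule mp)
    then obtain i j where ij: "i < j" "R (f (g i)) (f (g j))" by auto
    have "g i < g j" using sm ij(1) by (rule strict_monoD)
    then have "g i \<noteq> g j" by simp
    then have "col {g i, g j} = t" using Y(3) gY by blast
    with colg[OF ij(1)] ij(2) False show ?thesis by simp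
  qed
qed

lemma ascsD:
  fixes f :: "nat \<Rightarrow> 'a"
  assumes "ascs P R" "\<And>k. P (f k)"
  obtains g :: "nat \<Rightarrow> nat" where "strict_mono g" "\<And>i j. i < j \<Longrightarrow> R (f (g i)) (f (g j))"
proof -
  have "(\<forall>k. P (f k)) \<longrightarrow> (\<exists>g::nat\<Rightarrow>nat. strict_mono g \<and> (\<forall>i j. i < j \<longrightarrow> R (f (g i)) (f (g j))))"
    using assms(1) unfolding ascs_def by (rule spec)
  then have "\<exists>g::nat\<Rightarrow>nat. strict_mono g \<and> (\<forall>i j. i < j \<longrightarrow> R (f (g i)) (f (g j)))" using assms(2) by auto
  then show ?thesis using that by blast
qed

lemma afullI:
  assumes "\<And>f::nat \<Rightarrow> 'a. (\<And>k. P (f k)) \<Longrightarrow> \<exists>i j. i < j \<and> R (f i) (f j)"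
  shows "afull P R"
  unfolding afull_def using assms by auto

lemma ascs_prod:
  fixes A :: "'x set" and P :: "'x \<Rightarrow> 'a \<Rightarrow> bool"
  assumes "finite A" "\<forall>x\<in>A. ascs (P x) (R x)"
  shows "ascs (\<lambda>v. \<forall>x\<in>A. P x (v x)) (\<lambda>u v. \<forall>x\<in>A. R x (u x) (v x))"
  using assms
proof (induction A rule: finite_induct)
  case empty
  show ?case unfolding ascs_def by (auto intro!: exI[of _ id] simp: strict_mono_def)
next
  case (insert x F)
  show ?case unfolding ascs_def
  proof (intro allI impI)
    fix f :: "nat \<Rightarrow> 'x \<Rightarrow> 'a" assume Pf: "\<forall>k. \<forall>y\<in>insert x F. P y (f k y)"
    have IH: "ascs (\<lambda>v. \<forall>x\<in>F. P x (v x)) (\<lambda>u v. \<forall>x\<in>F. R x (u x) (v x))" using insert by auto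
    obtain g1 :: "nat \<Rightarrow> nat" where g1: "strict_mono g1" "\<And>i j. i < j \<Longrightarrow> (\<forall>y\<in>F. R y (f (g1 i) y) (f (g1 j) y))"
      using ascsD[OF IH, of f] Pf by auto
    have Ax: "ascs (P x) (R x)" using insert by auto
    obtain g2 :: "nat \<Rightarrow> nat" where g2: "strict_mono g2" "\<And>i j. i < j \<Longrightarrow> R x (f (g1 (g2 i)) x) (f (g1 (g2 j)) x)"
      using ascsD[OF Ax, of "\<lambda>k. f (g1 k) x"] Pf by auto
    have sm: "strict_mono (g1 \<circ> g2)" using g1(1) g2(1) by (simp add: strict_mono_def)
    have "\<forall>y\<in>insert x F. R y (f ((g1 \<circ> g2) i) y) (f ((g1 \<circ> g2) j) y)" if "i < j" for i j
      using g2(2)[OF that] g1(2)[OF strict_monoD[OF g2(1) that]] by auto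
    then show "\<exists>g::nat\<Rightarrow>nat. strict_mono g \<and> (\<forall>i j. i < j \<longrightarrow> (\<forall>y\<in>insert x F. R y (f (g i) y) (f (g j) y)))"
      using sm by blast
  qed
qed

lemma afull_nat: "afull (\<lambda>_. True) ((\<le>) :: nat \<Rightarrow> nat \<Rightarrow> bool)"
proof (rule afullI)
  fix f :: "nat \<Rightarrow> nat"
  obtain i where i: "\<forall>k. f i \<le> f k" using ex_has_least_nat[of "\<lambda>_. True" 0 f] by auto
  show "\<exists>i j. i < j \<and> f i \<le> f j" using i by (intro exI[of _ i] exI[of _ "Suc i"]) auto
qed

definition yP :: "(nat \<Rightarrow> nat) \<Rightarrow> bool" where
  "yP T \<longleftrightarrow> (\<forall>d. T (Suc d) \<le> T d) \<and> (\<exists>L. \<forall>d\<ge>L. T d = 0)"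

definition yR :: "(nat \<Rightarrow> nat) \<Rightarrow> (nat \<Rightarrow> nat) \<Rightarrow> bool" where
  "yR T T' \<longleftrightarrow> (\<forall>d. T d \<le> T' d)"

definition phi :: "nat \<Rightarrow> (nat \<Rightarrow> nat) \<Rightarrow> nat \<Rightarrow> nat" where
  "phi L T c = (if c < L then T c else card {e. L \<le> e \<and> c - L + 1 \<le> T e})"

lemma yP_mono: "yP T \<Longrightarrow> d \<le> e \<Longrightarrow> T e \<le> T d"
  by (rule lift_Suc_antimono_le[of T]) (auto simp: yP_def)

lemma young_key:
  assumes "yP T" "yP T'" "\<forall>e\<ge>L. T e < a" "\<forall>c<L+a. phi L T c \<le> phi L T' c"
  shows "T d \<le> T' d"
proof (cases "d < L")
  case True
  then show ?thesis using assms(4)[rule_format, of d] by (simp add: phi_def)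
next
  case False
  show ?thesis
  proof (rule ccontr)
    assume nle: "\<not> T d \<le> T' d"
    define b where "b = T d"
    have b1: "1 \<le> b" using nle b_def by simp
    have ba: "b < a" using assms(3) False b_def by simp
    define c where "c = L + b - 1"
    have c: "c < L + a" "\<not> c < L" "c - L + 1 = b" using b1 ba by (auto simp: c_def)
    define S where "S = {e. L \<le> e \<and> b \<le> T e}"
    define S' where "S' = {e. L \<le> e \<and> b \<le> T' e}"
    have "phi L T c \<le> phi L T' c" using assms(4) c(1) by blast
    moreover have "phi L T c = card S" by (simp only: phi_def if_not_P[OF c(2)] c(3) S_def)
    moreover have "phi L T' c = card S'" by (simp only: phi_def if_not_P[OF c(2)] c(3) S'_def)
    ultimately have cardle: "card S \<le> card S'" by simp
    obtain L0 where L0: "\<forall>e\<ge>L0. T e = 0" using assms(1) unfolding yP_def by blast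
    have finS: "finite S"
    proof (rule finite_subset[of _ "{..<L0}"])
      show "S \<subseteq> {..<L0}"
      proof
        fix e assume "e \<in> S"
        then have "b \<le> T e" by (simp add: S_def)
        then have "\<not> L0 \<le> e"
        proof -
          assume be: "b \<le> T e"
          show "\<not> L0 \<le> e"
          proof
            assume "L0 \<le> e"
            then have "T e = 0" using L0 by simp
            then show False using be b1 by simp
          qed
        qed
        then show "e \<in> {..<L0}" by simp
      qed
    qed simp
    have sub1: "{L..d} \<subseteq> S" unfolding S_def b_def using yP_mono[OF assms(1)] by auto
    have sub2: "S' \<subseteq> {L..<d}"
    proof
      fix e assume e: "e \<in> S'"
      have "\<not> d \<le> e"
      proof
        assume "d \<le> e"
        then have "T' e \<le> T' d" by (rule yP_mono[OF assms(2)])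
        then show False using e nle by (simp add: S'_def b_def)
      qed
      then show "e \<in> {L..<d}" using e by (simp add: S'_def)
    qed
    have "card {L..d} \<le> card S" using card_mono[OF finS sub1] .
    moreover have "card S' \<le> card {L..<d}" using card_mono[OF _ sub2] by simp
    moreover have "card {L..d} = Suc d - L" by simp
    moreover have "card {L..<d} = d - L" by simp
    ultimately show False using cardle False by linarith
  qed
qed

lemma afull_young: "afull yP yR"
proof (rule afullI)
  fix f :: "nat \<Rightarrow> nat \<Rightarrow> nat"
  assume Pf: "\<And>k. yP (f k)"
  show "\<exists>i j. i < j \<and> yR (f i) (f j)"
  proof (rule ccontr)
    assume H: "\<not> (\<exists>i j. i < j \<and> yR (f i) (f j))"
    obtain L where L: "\<forall>d\<ge>L. f 0 d = 0" using Pf[of 0] unfolding yP_def by blast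
    define a where "a = f 0 0"
    have bnd: "\<forall>e\<ge>L. f (Suc k) e < a" for k
    proof (intro allI impI)
      fix e assume e: "L \<le> e"
      have "\<not> yR (f 0) (f (Suc k))" using H zero_less_Suc by blast
      then obtain d where d: "f (Suc k) d < f 0 d" unfolding yR_def by (auto simp: not_le)
      have dL: "d < L"
      proof (rule ccontr)
        assume "\<not> d < L"
        then have "f 0 d = 0" using L by simp
        then show False using d by simp
      qed
      have "f (Suc k) e \<le> f (Suc k) d" using dL e by (intro yP_mono[OF Pf]) simp
      moreover have "f 0 d \<le> a" unfolding a_def by (intro yP_mono[OF Pf]) simp
      ultimately show "f (Suc k) e < a" using d by simp
    qed
    have A: "ascs (\<lambda>v. \<forall>c\<in>{..<L+a}. (\<lambda>_ _. True) c (v c)) (\<lambda>u v. \<forall>c\<in>{..<L+a}. (\<lambda>_. ((\<le>)::nat\<Rightarrow>nat\<Rightarrow>bool)) c (u c) (v c))"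
      using af_asc[OF afull_nat] by (intro ascs_prod) auto
    obtain g :: "nat \<Rightarrow> nat" where g: "strict_mono g" "\<And>i j. i < j \<Longrightarrow> \<forall>c\<in>{..<L+a}. phi L (f (Suc (g i))) c \<le> phi L (f (Suc (g j))) c"
      by (rule ascsD[OF A, of "\<lambda>k. phi L (f (Suc k))"]) auto
    have "\<forall>c<L+a. phi L (f (Suc (g 0))) c \<le> phi L (f (Suc (g 1))) c" using g(2)[of 0 1] by simp
    then have "yR (f (Suc (g 0))) (f (Suc (g 1)))" unfolding yR_def
      using young_key[OF Pf[of "Suc (g 0)"] Pf[of "Suc (g 1)"] bnd[of "g 0"]] by blast
    moreover have "Suc (g 0) < Suc (g 1)" using strict_monoD[OF g(1), of 0 1] by simp
    ultimately have "\<exists>i j. i < j \<and> yR (f i) (f j)" by blast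
    then show False using H by simp
  qed
qed

definition tls :: "('i \<times> nat \<Rightarrow>\<^sub>0 nat) \<Rightarrow> 'i \<Rightarrow> nat \<Rightarrow> nat" where
  "tls m i d = (\<Sum>v\<in>Poly_Mapping.keys m. if fst v = i \<and> d \<le> snd v then Poly_Mapping.lookup m v else 0)"

lemma tls_S:
  assumes "finite S" "Poly_Mapping.keys m \<subseteq> S"
  shows "tls m i d = (\<Sum>v\<in>S. if fst v = i \<and> d \<le> snd v then Poly_Mapping.lookup m v else 0)"
  unfolding tls_def
  by (rule sum.mono_neutral_left[OF assms]) (auto simp: in_keys_iff)

lemma tls_add: "tls (m + n) i d = tls m i d + tls n i d"
proof -
  let ?S = "Poly_Mapping.keys m \<union> Poly_Mapping.keys n"
  have f: "finite ?S" by simp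
  have "tls (m + n) i d = (\<Sum>v\<in>?S. if fst v = i \<and> d \<le> snd v then Poly_Mapping.lookup (m + n) v else 0)"
    by (rule tls_S[OF f keys_add])
  also have "\<dots> = (\<Sum>v\<in>?S. (if fst v = i \<and> d \<le> snd v then Poly_Mapping.lookup m v else 0) + (if fst v = i \<and> d \<le> snd v then Poly_Mapping.lookup n v else 0))"
    by (rule sum.cong) (auto simp: lookup_add)
  also have "\<dots> = tls m i d + tls n i d"
    by (simp add: sum.distrib tls_S[OF f])
  finally show ?thesis .
qed

lemma tls_single: "tls (Poly_Mapping.single (i', j) 1) i d = (if i' = i \<and> d \<le> j then 1 else 0)"
  unfolding tls_def by simp

lemma tls_Suc: "tls m i d = Poly_Mapping.lookup m (i, d) + tls m i (Suc d)"
proof -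
  let ?S = "insert (i, d) (Poly_Mapping.keys m)"
  have f: "finite ?S" by simp
  have sub: "Poly_Mapping.keys m \<subseteq> ?S" by auto
  have "tls m i d = (\<Sum>v\<in>?S. (if v = (i, d) then Poly_Mapping.lookup m v else 0) + (if fst v = i \<and> Suc d \<le> snd v then Poly_Mapping.lookup m v else 0))"
    unfolding tls_S[OF f sub] by (rule sum.cong) (auto simp: le_Suc_eq)
  also have "\<dots> = Poly_Mapping.lookup m (i, d) + tls m i (Suc d)"
    by (simp add: sum.distrib tls_S[OF f sub])
  finally show ?thesis .
qed

lemma tls_ev0: "\<exists>B. \<forall>i d. B \<le> d \<longrightarrow> tls m i d = 0"
proof -
  have "finite (snd ` Poly_Mapping.keys m)" by simp
  then obtain B where B: "\<forall>x\<in>snd ` Poly_Mapping.keys m. x < B" by (auto simp: finite_nat_set_iff_bounded)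
  have "tls m i d = 0" if "B \<le> d" for i d
    unfolding tls_def using B that by (intro sum.neutral) fastforce
  then show ?thesis by blast
qed

lemma yP_tls: "yP (\<lambda>d. tls m i d)"
  unfolding yP_def using tls_Suc[of m i] tls_ev0[of m] by (metis le_add2)

definition le_mon :: "('i \<times> nat \<Rightarrow>\<^sub>0 nat) \<Rightarrow> ('i \<times> nat \<Rightarrow>\<^sub>0 nat) \<Rightarrow> bool" where
  "le_mon m m' \<longleftrightarrow> (\<forall>i d. tls m i d \<le> tls m' i d)"

lemma afull_mon: "afull (\<lambda>_. True) (le_mon :: ('i::finite \<times> nat \<Rightarrow>\<^sub>0 nat) \<Rightarrow> _)"
proof (rule afullI)
  fix f :: "nat \<Rightarrow> ('i \<times> nat \<Rightarrow>\<^sub>0 nat)"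
  have A: "ascs (\<lambda>v. \<forall>x\<in>(UNIV::'i set). (\<lambda>_. yP) x (v x)) (\<lambda>u v. \<forall>x\<in>(UNIV::'i set). (\<lambda>_. yR) x (u x) (v x))"
    using af_asc[OF afull_young] by (intro ascs_prod) auto
  obtain g :: "nat \<Rightarrow> nat" where g: "strict_mono g" "\<And>i j. i < j \<Longrightarrow> \<forall>x\<in>(UNIV::'i set). yR (\<lambda>d. tls (f (g i)) x d) (\<lambda>d. tls (f (g j)) x d)"
    by (rule ascsD[OF A, of "\<lambda>k x d. tls (f k) x d"]) (auto simp: yP_tls)
  have "le_mon (f (g 0)) (f (g 1))" using g(2)[of 0 1] by (simp add: le_mon_def yR_def)
  moreover have "g 0 < g 1" using strict_monoD[OF g(1), of 0 1] by simp
  ultimately show "\<exists>i j. i < j \<and> le_mon (f i) (f j)" by blast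
qed

lemma mon_eq_tls:
  assumes "\<And>i d. tls x i d = tls y i d" shows "x = y"
proof (rule poly_mapping_eqI)
  fix v :: "'a \<times> nat"
  obtain i d where v: "v = (i, d)" by (cases v)
  show "Poly_Mapping.lookup x v = Poly_Mapping.lookup y v"
    using tls_Suc[of x i d] tls_Suc[of y i d] assms[of i d] assms[of i "Suc d"] v by simp
qed

lemma reach:
  fixes M :: "('i::finite \<times> nat \<Rightarrow>\<^sub>0 nat) set"
  assumes c1: "\<And>m r. m \<in> M \<Longrightarrow> m + r \<in> M"
    and c2: "\<And>a i j. a + Poly_Mapping.single (i, j) 1 \<in> M \<Longrightarrow> a + Poly_Mapping.single (i, Suc j) 1 \<in> M"
    and mM: "m \<in> M" and le: "le_mon m m'"
  shows "m' \<in> M"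
proof -
  obtain B where B: "\<forall>i d. B \<le> d \<longrightarrow> tls m' i d = 0" using tls_ev0 by blast
  define \<mu> where "\<mu> x = (\<Sum>i\<in>(UNIV::'i set). \<Sum>d<B. tls m' i d - tls x i d)" for x
  have step: "le_mon x1 m' \<and> \<mu> x1 < \<mu> x"
    if le_x: "le_mon x m'" and lt: "tls x i0 d0 < tls m' i0 d0"
      and x1: "\<And>k e. tls x1 k e = tls x k e + (if k = i0 \<and> e = d0 then 1 else 0)" for x x1 i0 d0
  proof
    show le1: "le_mon x1 m'" unfolding le_mon_def
    proof (intro allI)
      fix k e show "tls x1 k e \<le> tls m' k e"
        using x1[of k e] le_x lt unfolding le_mon_def by (cases "k = i0 \<and> e = d0") auto
    qed
    have d0B: "d0 < B"
    proof (rule ccontr)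
      assume "\<not> d0 < B"
      then have "tls m' i0 d0 = 0" using B by simp
      then show False using lt by simp
    qed
    have "tls m' k e - tls x k e = (tls m' k e - tls x1 k e) + (if k = i0 \<and> e = d0 then 1 else 0)" for k e
      using x1[of k e] le1[unfolded le_mon_def, rule_format, of k e] by (cases "k = i0 \<and> e = d0") auto
    then have "\<mu> x = (\<Sum>i\<in>(UNIV::'i set). \<Sum>d<B. (tls m' i d - tls x1 i d) + (if i = i0 \<and> d = d0 then 1 else 0))"
      unfolding \<mu>_def by simp
    also have "\<dots> = \<mu> x1 + (\<Sum>i\<in>(UNIV::'i set). \<Sum>d<B. (if i = i0 \<and> d = d0 then 1 else 0))"
      unfolding \<mu>_def by (simp add: sum.distrib)
    also have "(\<Sum>i\<in>(UNIV::'i set). \<Sum>d<B. (if i = i0 \<and> d = d0 then 1 else (0::nat))) = (\<Sum>i\<in>(UNIV::'i set). if i = i0 then 1 else 0)"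
      by (rule sum.cong) (auto simp: d0B)
    also have "\<dots> = 1" by simp
    finally show "\<mu> x1 < \<mu> x" by simp
  qed
  have main: "\<forall>x. \<mu> x = n \<longrightarrow> x \<in> M \<longrightarrow> le_mon x m' \<longrightarrow> m' \<in> M" for n
  proof (induction n rule: less_induct)
    case (less n)
    show ?case
    proof (intro allI impI)
      fix x assume xn: "\<mu> x = n" and xM: "x \<in> M" and lex: "le_mon x m'"
      show "m' \<in> M"
      proof (cases "\<forall>i d. tls x i d = tls m' i d")
        case True
        then have "x = m'" by (intro mon_eq_tls) blast
        then show ?thesis using xM by simp
      next
        case False
        then obtain i d where "tls x i d \<noteq> tls m' i d" by blast
        then have ltd: "tls x i d < tls m' i d" using lex unfolding le_mon_def by (meson le_neq_implies_less)
        have "\<exists>x1 d0. x1 \<in> M \<and> tls x i d0 < tls m' i d0 \<and> (\<forall>k e. tls x1 k e = tls x k e + (if k = i \<and> e = d0 then 1 else 0))"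
        proof (cases "tls x i 0 < tls m' i 0")
          case True
          define x1 where "x1 = x + Poly_Mapping.single (i, 0) 1"
          have "x1 \<in> M" unfolding x1_def using xM by (rule c1)
          moreover have "\<forall>k e. tls x1 k e = tls x k e + (if k = i \<and> e = 0 then 1 else 0)"
            unfolding x1_def tls_add tls_single by auto
          ultimately show ?thesis using True by blast
        next
          case False
          define d0 where "d0 = (LEAST d. tls x i d < tls m' i d)"
          have d0: "tls x i d0 < tls m' i d0" unfolding d0_def by (rule LeastI[of _ d]) (rule ltd)
          have "d0 \<noteq> 0"
          proof
            assume "d0 = 0" then show False using d0 False by simp
          qed
          then obtain d' where d': "d0 = Suc d'" using not0_implies_Suc by blast
          have "\<not> tls x i d' < tls m' i d'" unfolding d0_def
            using not_less_Least[of d' "\<lambda>d. tls x i d < tls m' i d"] d' d0_def by simp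
          then have eqd': "tls x i d' = tls m' i d'" using lex unfolding le_mon_def by (meson le_antisym not_less)
          have lk: "Poly_Mapping.lookup x (i, d') \<ge> 1"
            using tls_Suc[of x i d'] tls_Suc[of m' i d'] eqd' d0 d' by simp
          define a where "a = x - Poly_Mapping.single (i, d') 1"
          have xa: "x = a + Poly_Mapping.single (i, d') 1"
          proof (rule poly_mapping_eqI)
            fix v show "Poly_Mapping.lookup x v = Poly_Mapping.lookup (a + Poly_Mapping.single (i, d') 1) v"
              using lk unfolding a_def by (cases "v = (i, d')") (auto simp: lookup_add lookup_minus lookup_single)
          qed
          define x1 where "x1 = a + Poly_Mapping.single (i, d0) 1"
          have "x1 \<in> M" unfolding x1_def d' using xM xa by (intro c2) simp
          moreover have "\<forall>k e. tls x1 k e = tls x k e + (if k = i \<and> e = d0 then 1 else 0)"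
            unfolding x1_def xa tls_add tls_single using d' by (auto simp: le_Suc_eq)
          ultimately show ?thesis using d0 by blast
        qed
        then obtain x1 d0 where x1: "x1 \<in> M" "tls x i d0 < tls m' i d0"
          "\<And>k e. tls x1 k e = tls x k e + (if k = i \<and> e = d0 then 1 else 0)" by blast
        from step[OF lex x1(2) x1(3)] have "le_mon x1 m'" "\<mu> x1 < \<mu> x" by auto
        then show ?thesis using less.IH[of "\<mu> x1"] xn x1(1) by blast
      qed
    qed
  qed
  show ?thesis using main mM le by blast
qed

lemma wm_closure_props:
  "sigma_ideal s (wm_closure s G) \<and> well_mixed s (wm_closure s G)"
  unfolding wm_closure_def sigma_ideal_def is_ideal_def well_mixed_def by auto

lemma wm_sub: "sigma_ideal s J \<Longrightarrow> well_mixed s J \<Longrightarrow> G \<subseteq> J \<Longrightarrow> wm_closure s G \<subseteq> J"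
  unfolding wm_closure_def by blast

lemma wm_incl: "G \<subseteq> wm_closure s G"
  unfolding wm_closure_def by blast

lemma shift_single: "shift_mon (Poly_Mapping.single (i, j) (1::nat)) = Poly_Mapping.single (i, Suc j) 1"
  unfolding shift_mon_def by simp

lemma dsigma_single: "s 1 = 1 \<Longrightarrow> dsigma s (Poly_Mapping.single e (1::'k::field)) = Poly_Mapping.single (shift_mon e) 1"
  unfolding dsigma_def by simp

lemma closure_c1:
  fixes I :: "('i, 'k::field) dpoly set"
  assumes "is_ideal I" "Poly_Mapping.single m 1 \<in> I"
  shows "Poly_Mapping.single (m + r) 1 \<in> I"
proof -
  have "Poly_Mapping.single r 1 * Poly_Mapping.single m 1 \<in> I" using assms unfolding is_ideal_def by blast
  then show ?thesis by (simp add: mult_single add.commute)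
qed

lemma closure_c2:
  fixes I :: "('i, 'k::field) dpoly set"
  assumes "s 1 = 1" "well_mixed s I" "Poly_Mapping.single (a + Poly_Mapping.single (i, j) 1) 1 \<in> I"
  shows "Poly_Mapping.single (a + Poly_Mapping.single (i, Suc j) 1) 1 \<in> I"
proof -
  have "Poly_Mapping.single a (1::'k) * Poly_Mapping.single (Poly_Mapping.single (i, j) 1) 1 \<in> I"
    using assms(3) by (simp add: mult_single)
  then have "Poly_Mapping.single a (1::'k) * dsigma s (Poly_Mapping.single (Poly_Mapping.single (i, j) 1) 1) \<in> I"
    using assms(2) unfolding well_mixed_def by blast
  then show ?thesis unfolding dsigma_single[of s, OF assms(1)] shift_single mult_single by simp
qed

theorem corollary4p11:
  fixes s :: "'k::field_char_0 \<Rightarrow> 'k"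
    and I :: "nat \<Rightarrow> ('i::finite, 'k) dpoly set"
    and F :: "nat \<Rightarrow> ('i, 'k) dpoly set"
  assumes "ring_endo s"
    and "\<And>j. F j \<subseteq> {p. is_monomial p}"
    and "\<And>j. I j = wm_closure s (F j)"
  shows "\<not> (\<forall>j. I j \<subset> I (Suc j))"
proof
  assume ch: "\<forall>j. I j \<subset> I (Suc j)"
  have s1: "s 1 = 1" using assms(1) unfolding ring_endo_def by blast
  have props: "sigma_ideal s (I j)" "well_mixed s (I j)" for j
    using wm_closure_props[of s "F j"] assms(3)[of j] by auto
  define M where "M j = {m. Poly_Mapping.single m (1::'k) \<in> I j}" for j
  have monoI: "I i \<subseteq> I j" if "i \<le> j" for i j
    using lift_Suc_mono_le[of I, OF _ that] ch by blast
  have "\<exists>m. m \<in> M (Suc j) \<and> m \<notin> M j" for j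
  proof (rule ccontr)
    assume "\<not> (\<exists>m. m \<in> M (Suc j) \<and> m \<notin> M j)"
    then have MM: "M (Suc j) \<subseteq> M j" by blast
    have "F (Suc j) \<subseteq> I j"
    proof
      fix p assume p: "p \<in> F (Suc j)"
      then obtain m where pm: "p = Poly_Mapping.single m 1" using assms(2) unfolding is_monomial_def by blast
      have "p \<in> I (Suc j)" using p wm_incl assms(3) by blast
      then have "m \<in> M (Suc j)" using pm M_def by simp
      then show "p \<in> I j" using MM pm M_def by auto
    qed
    then have "I (Suc j) \<subseteq> I j" using wm_sub[OF props] assms(3)[of "Suc j"] by simp
    then show False using ch by blast
  qed
  then obtain m where m: "\<And>j. m j \<in> M (Suc j) \<and> m j \<notin> M j" by metis
  obtain i j where ij: "i < j" "le_mon (m i) (m j)"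
    using afull_mon[unfolded afull_def, rule_format, of m] by blast
  have "m i \<in> M j" using m[of i] monoI[of "Suc i" j] ij(1) unfolding M_def by auto
  moreover have "x \<in> M j \<Longrightarrow> x + r \<in> M j" for x r
    unfolding M_def using closure_c1 props(1) unfolding sigma_ideal_def by blast
  moreover have "a + Poly_Mapping.single (i', j') 1 \<in> M j \<Longrightarrow> a + Poly_Mapping.single (i', Suc j') 1 \<in> M j" for a i' j'
    unfolding M_def using closure_c2[OF s1 props(2)] by blast
  ultimately have "m j \<in> M j" using reach[of "M j"] ij(2) by blast
  then show False using m[of j] by blast
qed

end
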